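(* Let $C=(1,c_2,c_3,c_4,c_5,c_6)$ be a canonical system whose subsystem $C'=(1,c_2,c_3,c_4,c_5)$ is noncanonical, and let $\ell=\lceil c_5/c_3\rceil$. Then $C$ satisfies (a), (b), or (c): (a) $C=(1,2,3,c_4,c_4+1,2c_4)$ and $c_4>4$; (b) $C=(1,c_2,2c_2-1,c_4,c_2+c_4-1,2c_4-1)$, $c_4\ge 3c_2-1$, $\mathrm{grd}_C(\ell c_3)=\ell c_3-c_5+1-\lfloor(\ell c_3-c_5)/c_2\rfloor(c_2-1)$, and $\mathrm{grd}_C(\ell c_3)\le\ell$; (c) $C=(1,c_2,2c_2,c_4,c_2+c_4,2c_4)$, $c_4\ge 3c_2-1$, $c_4\ne 3c_2$, $\mathrm{grd}_C(\ell c_3)=\ell c_3-c_5+1-\lfloor(\ell c_3-c_5)/c_2\rfloor(c_2-1)$, and $\mathrm{grd}_C(\ell c_3)\le\ell$.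
   Context: A system is a tuple $C=(c_1,\dots,c_n)$ of integers with $1=c_1<c_2<\dots<c_n$; for $k\le n$, $(c_1,\dots,c_k)$ is a subsystem. For a positive integer $v$, $\mathrm{opt}_C(v)$ is the minimum of $\sum_i x_i$ over $x\in\mathbb{Z}_{\ge0}^n$ with $\sum_i c_ix_i=v$. The greedy representation of $v$ is produced by: for $i=n$ down to $1$, while $c_i\le$ remaining value, take a coin $c_i$. $\mathrm{grd}_C(v)$ is its number of coins. A positive integer $w$ is a counterexample if $\mathrm{opt}_C(w)<\mathrm{grd}_C(w)$; $C$ is canonical if it has none, noncanonical otherwise. *)

theory Defs
  imports Main
begin

text \<open>A coin system is a strictly increasing list of positive integers starting with 1.
  Coin c_i (1-based in the paper) is C ! (i - 1).\<close>
definition is_system :: "nat list \<Rightarrow> bool" where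
  "is_system C \<longleftrightarrow> C \<noteq> [] \<and> hd C = 1 \<and> sorted_wrt (<) C"

definition opt :: "nat list \<Rightarrow> nat \<Rightarrow> nat" where
  "opt C v = (LEAST k. \<exists>x :: nat \<Rightarrow> nat.
      (\<Sum>i<length C. C ! i * x i) = v \<and> (\<Sum>i<length C. x i) = k)"

fun grd_desc :: "nat list \<Rightarrow> nat \<Rightarrow> nat" where
  "grd_desc [] v = 0"
| "grd_desc (c # cs) v = v div c + grd_desc cs (v mod c)"

definition grd :: "nat list \<Rightarrow> nat \<Rightarrow> nat" where
  "grd C v = grd_desc (rev C) v"

definition canonical :: "nat list \<Rightarrow> bool" where
  "canonical C \<longleftrightarrow> (\<forall>w>0. \<not> opt C w < grd C w)"

end

theory Submission
  imports Defs
begin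

lemma sum6: "(\<Sum>i<length [1,a,b,d,e,f::nat]. [1,a,b,d,e,f] ! i * x i) = x 0 + a * x 1 + b * x 2 + d * x 3 + e * x 4 + f * x 5"
  by (simp add: numeral_eq_Suc lessThan_Suc add_ac)
lemma cnt6: "(\<Sum>i<length [1,a,b,d,e,f::nat]. x i) = x 0 + x 1 + x 2 + x 3 + x 4 + x 5"
  by (simp add: numeral_eq_Suc lessThan_Suc add_ac)
lemma sum5: "(\<Sum>i<length [1,a,b,d,e::nat]. [1,a,b,d,e] ! i * x i) = x 0 + a * x 1 + b * x 2 + d * x 3 + e * x 4"
  by (simp add: numeral_eq_Suc lessThan_Suc add_ac)
lemma cnt5: "(\<Sum>i<length [1,a,b,d,e::nat]. x i) = x 0 + x 1 + x 2 + x 3 + x 4"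
  by (simp add: numeral_eq_Suc lessThan_Suc add_ac)

lemma opt_le:
  assumes "(\<Sum>i<length C. C ! i * x i) = v"
  shows "opt C v \<le> (\<Sum>i<length C. x i)"
  unfolding opt_def by (rule Least_le) (use assms in blast)

lemma opt_ex:
  assumes "C \<noteq> []" "hd C = 1"
  shows "\<exists>x. (\<Sum>i<length C. C ! i * x i) = v \<and> (\<Sum>i<length C. x i) = opt C v"
proof -
  let ?x = "\<lambda>i::nat. if i = 0 then v else 0"
  have h0: "C ! 0 = 1" using assms by (simp add: hd_conv_nth)
  have "(\<Sum>i<length C. C ! i * ?x i) = (\<Sum>i<length C. if i = 0 then v else 0)"
    by (rule sum.cong) (auto simp: h0)
  also have "\<dots> = v" using assms by (simp add: sum.delta)
  finally have "(\<Sum>i<length C. C ! i * ?x i) = v" .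
  then have "\<exists>k x. (\<Sum>i<length C. C ! i * x i) = v \<and> (\<Sum>i<length C. x i) = k" by (intro exI[of _ "sum ?x {..<length C}"] exI[of _ ?x]) simp
  then have "\<exists>x. (\<Sum>i<length C. C ! i * x i) = v \<and> (\<Sum>i<length C. x i) = opt C v"
    unfolding opt_def by (rule LeastI_ex)
  then show ?thesis .
qed

lemma gd_zero[simp]: "grd_desc cs 0 = 0"
  by (induction cs) auto

lemma gd_lt: "v < c \<Longrightarrow> grd_desc (c # cs) v = grd_desc cs v"
  by simp
lemma gd_ge: "c \<le> v \<Longrightarrow> 0 < c \<Longrightarrow> grd_desc (c # cs) v = Suc (grd_desc (c # cs) (v - c))"
proof -
  assume h: "c \<le> v" "0 < c"
  have "v div c = Suc ((v - c) div c)" using h by (simp add: le_div_geq)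
  moreover have "v mod c = (v - c) mod c" using h by (simp add: le_mod_geq)
  ultimately show ?thesis by simp
qed

lemma gd0: "1 \<in> set cs \<Longrightarrow> grd_desc cs v = 0 \<longleftrightarrow> v = 0"
proof (induction cs arbitrary: v)
  case Nil then show ?case by simp
next
  case (Cons c cs)
  show ?case
  proof (cases "c = 1")
    case True then show ?thesis by auto
  next
    case False
    then have "1 \<in> set cs" using Cons.prems by simp
    then show ?thesis using Cons.IH[of "v mod c"]
      by (cases "c = 0") (auto simp: div_eq_0_iff)
  qed
qed

lemma gd1: "sorted_wrt (>) cs \<Longrightarrow> 1 \<in> set cs \<Longrightarrow> (\<forall>c\<in>set cs. c \<ge> 1) \<Longrightarrow>
   grd_desc cs v \<le> 1 \<longleftrightarrow> v = 0 \<or> v \<in> set cs"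
proof (induction cs arbitrary: v)
  case Nil then show ?case by simp
next
  case (Cons c cs)
  have c1: "c \<ge> 1" using Cons.prems by simp
  show ?case
  proof (cases "v < c")
    case True
    then have g: "grd_desc (c # cs) v = grd_desc cs v" by simp
    show ?thesis
    proof (cases "c = 1")
      case True
      with \<open>v < c\<close> show ?thesis by auto
    next
      case False
      then have "1 \<in> set cs" using Cons.prems by simp
      then show ?thesis using Cons.IH[of v] Cons.prems \<open>v < c\<close> g by auto
    qed
  next
    case False
    have "grd_desc (c # cs) v = Suc (grd_desc (c # cs) (v - c))" using False c1 by (intro gd_ge) auto
    also have "\<dots> = Suc ((v - c) div c + grd_desc cs ((v - c) mod c))" by simp
    finally have g: "grd_desc (c # cs) v = Suc ((v - c) div c + grd_desc cs ((v - c) mod c))" .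
    have "grd_desc (c # cs) v \<le> 1 \<longleftrightarrow> v = c"
    proof
      assume "grd_desc (c # cs) v \<le> 1"
      then have A: "(v - c) div c = 0" and B: "grd_desc cs ((v - c) mod c) = 0" using g by auto
      have "(v - c) mod c = 0"
      proof (cases "c = 1")
        case True then show ?thesis by simp
      next
        case False
        then have "1 \<in> set cs" using Cons.prems by simp
        then show ?thesis using B gd0 by blast
      qed
      with A have "v - c = 0" by (metis div_mult_mod_eq mult_0 add_0)
      then show "v = c" using False by simp
    next
      assume "v = c" then show "grd_desc (c # cs) v \<le> 1" using g c1 by simp
    qed
    moreover have "v \<in> set (c # cs) \<longleftrightarrow> v = c" using False Cons.prems(1) by auto
    ultimately show ?thesis using False by auto
  qed
qed

lemma gd2: "sorted_wrt (>) (c # cs) \<Longrightarrow> 1 \<in> set (c # cs) \<Longrightarrow> (\<forall>c'\<in>set (c # cs). c' \<ge> 1) \<Longrightarrow>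
   c \<le> v \<Longrightarrow> grd_desc (c # cs) v \<le> 2 \<Longrightarrow> v - c = 0 \<or> v - c \<in> set (c # cs)"
proof -
  assume h: "sorted_wrt (>) (c # cs)" "1 \<in> set (c # cs)" "\<forall>c'\<in>set (c # cs). c' \<ge> 1" "c \<le> v"
    "grd_desc (c # cs) v \<le> 2"
  have "grd_desc (c # cs) v = Suc (grd_desc (c # cs) (v - c))" using h by (intro gd_ge) auto
  with h have "grd_desc (c # cs) (v - c) \<le> 1" by simp
  with gd1[OF h(1-3)] show ?thesis by blast
qed




lemma sum_upd:
  fixes C :: "nat list"
  assumes "i < length C"
  shows "(\<Sum>j<length C. C ! j * (x(i := y)) j) + C ! i * x i = (\<Sum>j<length C. C ! j * x j) + C ! i * y"
proof -
  have f: "finite {..<length C}" by simp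
  have i: "i \<in> {..<length C}" using assms by simp
  have E: "(\<Sum>j\<in>{..<length C} - {i}. C ! j * (x(i := y)) j) = (\<Sum>j\<in>{..<length C} - {i}. C ! j * x j)"
    by (rule sum.cong) auto
  have A: "(\<Sum>j<length C. C ! j * (x(i := y)) j) = C ! i * y + (\<Sum>j\<in>{..<length C} - {i}. C ! j * x j)"
    using sum.remove[OF f i, of "\<lambda>j. C ! j * (x(i := y)) j"] E by simp
  have B: "(\<Sum>j<length C. C ! j * x j) = C ! i * x i + (\<Sum>j\<in>{..<length C} - {i}. C ! j * x j)"
    using sum.remove[OF f i, of "\<lambda>j. C ! j * x j"] by simp
  show ?thesis using A B by simp
qed

lemma cnt_upd:
  fixes C :: "nat list"
  assumes "i < length C"
  shows "(\<Sum>j<length C. (x(i := y)) j) + x i = (\<Sum>j<length C. x j) + y"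
proof -
  have f: "finite {..<length C}" by simp
  have i: "i \<in> {..<length C}" using assms by simp
  have E: "(\<Sum>j\<in>{..<length C} - {i}. (x(i := y)) j) = (\<Sum>j\<in>{..<length C} - {i}. x j)"
    by (rule sum.cong) auto
  have A: "(\<Sum>j<length C. (x(i := y)) j) = y + (\<Sum>j\<in>{..<length C} - {i}. x j)"
    using sum.remove[OF f i, of "\<lambda>j. (x(i := y)) j"] E by simp
  have B: "(\<Sum>j<length C. x j) = x i + (\<Sum>j\<in>{..<length C} - {i}. x j)"
    using sum.remove[OF f i, of "\<lambda>j. x j"] by simp
  show ?thesis unfolding A B by (simp add: ac_simps)
qed

lemma opt_add:
  assumes "C \<noteq> []" "hd C = 1" "i < length C"
  shows "opt C (v + C ! i) \<le> Suc (opt C v)"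
proof -
  obtain x where x: "(\<Sum>j<length C. C ! j * x j) = v" "(\<Sum>j<length C. x j) = opt C v"
    using opt_ex[OF assms(1,2)] by blast
  let ?y = "x(i := Suc (x i))"
  have "(\<Sum>j<length C. C ! j * ?y j) = v + C ! i"
    using sum_upd[OF assms(3), of x "Suc (x i)"] x(1) by simp
  then have "opt C (v + C ! i) \<le> (\<Sum>j<length C. ?y j)" by (rule opt_le)
  also have "(\<Sum>j<length C. ?y j) = Suc (opt C v)"
    using cnt_upd[OF assms(3), of x "Suc (x i)"] x(2) by simp
  finally show ?thesis .
qed

lemma opt_rem:
  assumes "i < length C" "0 < x i" "(\<Sum>j<length C. C ! j * x j) = v"
  shows "opt C (v - C ! i) \<le> (\<Sum>j<length C. x j) - 1" "C ! i \<le> v"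
proof -
  let ?y = "x(i := x i - 1)"
  have s: "(\<Sum>j<length C. C ! j * ?y j) + C ! i * x i = v + C ! i * (x i - 1)"
    using sum_upd[OF assms(1), of x "x i - 1"] assms(3) by simp
  have "C ! i * x i = C ! i * (x i - 1) + C ! i" using assms(2)
    by (metis Suc_diff_1 add.commute mult_Suc_right)
  with s have s2: "(\<Sum>j<length C. C ! j * ?y j) + C ! i = v" by simp
  then show "C ! i \<le> v" by simp
  from s2 have "(\<Sum>j<length C. C ! j * ?y j) = v - C ! i" by simp
  then have "opt C (v - C ! i) \<le> (\<Sum>j<length C. ?y j)" by (rule opt_le)
  also have "(\<Sum>j<length C. ?y j) = (\<Sum>j<length C. x j) - 1"
    using cnt_upd[OF assms(1), of x "x i - 1"] assms(2) by simp
  finally show "opt C (v - C ! i) \<le> (\<Sum>j<length C. x j) - 1" .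
qed

lemma opt_le_grd5:
  fixes a b d e :: nat
  assumes "0 < a" "0 < b" "0 < d" "0 < e"
  shows "opt [1,a,b,d,e] v \<le> grd [1,a,b,d,e] v"
proof -
  define x4 where "x4 = v div e"
  define r4 where "r4 = v mod e"
  define x3 where "x3 = r4 div d"
  define r3 where "r3 = r4 mod d"
  define x2 where "x2 = r3 div b"
  define r2 where "r2 = r3 mod b"
  define x1 where "x1 = r2 div a"
  define x0 where "x0 = r2 mod a"
  let ?x = "(\<lambda>i::nat. if i = 0 then x0 else if i = 1 then x1 else if i = 2 then x2 else if i = 3 then x3 else x4)"
  have "(\<Sum>i<length [1,a,b,d,e]. [1,a,b,d,e] ! i * ?x i) = x0 + a * x1 + b * x2 + d * x3 + e * x4"
    by (simp add: sum5)
  also have "\<dots> = v"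
  proof -
    have "r2 = x0 + a * x1" unfolding x0_def x1_def by simp
    moreover have "r3 = r2 + b * x2" unfolding r2_def x2_def by simp
    moreover have "r4 = r3 + d * x3" unfolding r3_def x3_def by simp
    moreover have "v = r4 + e * x4" unfolding r4_def x4_def by simp
    ultimately show ?thesis by simp
  qed
  finally have "opt [1,a,b,d,e] v \<le> (\<Sum>i<length [1,a,b,d,e]. ?x i)" by (rule opt_le)
  also have "(\<Sum>i<length [1,a,b,d,e]. ?x i) = x0 + x1 + x2 + x3 + x4" by (simp add: cnt5)
  also have "\<dots> = grd [1,a,b,d,e] v"
    unfolding grd_def x0_def x1_def x2_def x3_def x4_def r2_def r3_def r4_def by simp
  finally show ?thesis .
qed




declare grd_desc.simps[simp del]

lemma can_le:
  assumes "canonical C" "0 < v" "(\<Sum>i<length C. C ! i * x i) = v"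
  shows "grd C v \<le> (\<Sum>i<length C. x i)"
proof -
  have "\<not> opt C v < grd C v" using assms(1,2) unfolding canonical_def by blast
  then have "grd C v \<le> opt C v" by simp
  also have "\<dots> \<le> (\<Sum>i<length C. x i)" using opt_le[OF assms(3)] .
  finally show ?thesis .
qed

lemma one_sum:
  fixes C :: "nat list"
  assumes "i < n"
  shows "(\<Sum>k<n. C ! k * (if k = i then 1 else 0)) = C ! i"
proof -
  have "(\<Sum>k<n. C ! k * (if k = i then 1 else 0)) = (\<Sum>k<n. if k = i then C ! i else 0)"
    by (rule sum.cong) auto
  then show ?thesis using assms by simp
qed

lemma one_cnt:
  fixes i n :: nat
  assumes "i < n"
  shows "(\<Sum>k<n. (if k = i then 1 else 0::nat)) = 1"
  using assms by simp

lemma two_sum: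
  fixes C :: "nat list"
  assumes "i < length C" "j < length C"
  shows "(\<Sum>k<length C. C ! k * ((if k = i then 1 else 0) + (if k = j then 1 else 0))) = C ! i + C ! j"
    and "(\<Sum>k<length C. ((if k = i then 1 else 0) + (if k = j then 1 else 0)::nat)) = 2"
proof -
  have "(\<Sum>k<length C. C ! k * ((if k = i then 1 else 0) + (if k = j then 1 else 0))) =
    (\<Sum>k<length C. C ! k * (if k = i then 1 else 0)) + (\<Sum>k<length C. C ! k * (if k = j then 1 else 0))"
    by (simp only: distrib_left sum.distrib)
  then show "(\<Sum>k<length C. C ! k * ((if k = i then 1 else 0) + (if k = j then 1 else 0))) = C ! i + C ! j"
    using one_sum[OF assms(1), of C] one_sum[OF assms(2), of C] by simp
  have "(\<Sum>k<length C. ((if k = i then 1 else 0) + (if k = j then 1 else 0)::nat)) =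
     (\<Sum>k<length C. (if k = i then 1 else 0::nat)) + (\<Sum>k<length C. (if k = j then 1 else 0::nat))"
    by (simp only: sum.distrib)
  then show "(\<Sum>k<length C. ((if k = i then 1 else 0) + (if k = j then 1 else 0)::nat)) = 2"
    using one_cnt[OF assms(1)] one_cnt[OF assms(2)] by simp
qed

lemma G_pair:
  assumes "canonical C" "i < length C" "j < length C" "0 < C ! i + C ! j"
  shows "grd C (C ! i + C ! j) \<le> 2"
  using can_le[OF assms(1) assms(4) two_sum(1)[OF assms(2,3)]] two_sum(2)[OF assms(2,3)] by simp

locale sys6 =
  fixes a b d e f :: nat
  assumes o1: "1 < a" and o2: "a < b" and o3: "b < d" and o4: "d < e" and o5: "e < f"
begin

abbreviation "G \<equiv> grd_desc [f,e,d,b,a,1]"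

lemma srt: "sorted_wrt (>) [f,e,d,b,a,1]" "sorted_wrt (>) [e,d,b,a,1]" "sorted_wrt (>) [d,b,a,1]"
  "sorted_wrt (>) [b,a,1]"
  using o1 o2 o3 o4 o5 by auto

lemma L_top: "f \<le> v \<Longrightarrow> G v \<le> 2 \<Longrightarrow> v = f \<or> v = f + f \<or> v = f + e \<or> v = f + d \<or> v = f + b \<or> v = f + a \<or> v = f + 1"
proof -
  assume h: "f \<le> v" "G v \<le> 2"
  have "v - f = 0 \<or> v - f \<in> set [f,e,d,b,a,1]"
    by (rule gd2[OF srt(1)]) (use h o1 o2 o3 o4 o5 in auto)
  then show ?thesis using h(1) by auto
qed

lemma L_e: "e \<le> v \<Longrightarrow> v < f \<Longrightarrow> G v \<le> 2 \<Longrightarrow> v = e \<or> v = e + e \<or> v = e + d \<or> v = e + b \<or> v = e + a \<or> v = e + 1"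
proof -
  assume h: "e \<le> v" "v < f" "G v \<le> 2"
  have "G v = grd_desc [e,d,b,a,1] v" using h(2) by (rule gd_lt)
  then have g: "grd_desc [e,d,b,a,1] v \<le> 2" using h(3) by simp
  have "v - e = 0 \<or> v - e \<in> set [e,d,b,a,1]"
    by (rule gd2[OF srt(2)]) (use h g o1 o2 o3 o4 o5 in auto)
  then show ?thesis using h(1) by auto
qed

lemma L_d: "d \<le> v \<Longrightarrow> v < e \<Longrightarrow> G v \<le> 2 \<Longrightarrow> v = d \<or> v = d + d \<or> v = d + b \<or> v = d + a \<or> v = d + 1"
proof -
  assume h: "d \<le> v" "v < e" "G v \<le> 2"
  have "G v = grd_desc [d,b,a,1] v" using h(2) o5 by (simp add: gd_lt)
  then have g: "grd_desc [d,b,a,1] v \<le> 2" using h(3) by simp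
  have "v - d = 0 \<or> v - d \<in> set [d,b,a,1]"
    by (rule gd2[OF srt(3)]) (use h g o1 o2 o3 o4 o5 in auto)
  then show ?thesis using h(1) by auto
qed

lemma G3_le1: "grd_desc [b,a,1] t \<le> 1 \<longleftrightarrow> t = 0 \<or> t = b \<or> t = a \<or> t = 1"
  using gd1[OF srt(4), of t] o1 o2 by auto

lemma G_small: "t < d \<Longrightarrow> G t = grd_desc [b,a,1] t"
  using o3 o4 o5 by (simp add: gd_lt)

context
  assumes can: "canonical [1,a,b,d,e,f]"
begin

lemma grdG: "grd [1,a,b,d,e,f] v = G v"
  by (simp add: grd_def del: grd_desc.simps)

lemma Gp:
  assumes "i < 6" "j < 6" "0 < v" "v = [1,a,b,d,e,f] ! i + [1,a,b,d,e,f] ! j"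
  shows "G v \<le> 2"
proof -
  have "grd [1,a,b,d,e,f] ([1,a,b,d,e,f] ! i + [1,a,b,d,e,f] ! j) \<le> 2"
    using G_pair[OF can, of i j] assms by simp
  then have "grd [1,a,b,d,e,f] v \<le> 2" using assms(4) by simp
  then show ?thesis by (simp only: grdG)
qed

lemma DE: "f < d + e \<Longrightarrow> d+e = f+1 \<or> d+e = f+a \<or> d+e = f+b"
proof -
  have g: "G (d+e) \<le> 2" by (rule Gp[of 3 4]) (use o1 o2 o3 o4 o5 in \<open>auto simp: algebra_simps\<close>)
  show "f < d + e \<Longrightarrow> d+e = f+1 \<or> d+e = f+a \<or> d+e = f+b" using L_top[of "d+e"] g o1 o2 o3 o4 o5 by linarith
qed

lemma EE: "f < d + e \<Longrightarrow> 2*e = f+a \<or> 2*e = f+b \<or> 2*e = f+d"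
proof -
  have g: "G (2*e) \<le> 2" by (rule Gp[of 4 4]) (use o1 o2 o3 o4 o5 in \<open>auto simp: algebra_simps\<close>)
  show "f < d + e \<Longrightarrow> 2*e = f+a \<or> 2*e = f+b \<or> 2*e = f+d" using L_top[of "2*e"] g o1 o2 o3 o4 o5 by linarith
qed

lemma AE: "f \<le> e + a \<Longrightarrow> e+a = f \<or> e+a = f+1"
proof -
  have g: "G (e+a) \<le> 2" by (rule Gp[of 4 1]) (use o1 o2 o3 o4 o5 in \<open>auto simp: algebra_simps\<close>)
  show "f \<le> e + a \<Longrightarrow> e+a = f \<or> e+a = f+1" using L_top[of "e+a"] g o1 o2 o3 o4 o5 by linarith
qed

lemma BE: "f \<le> e + b \<Longrightarrow> e+b = f \<or> e+b = f+1 \<or> e+b = f+a"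
proof -
  have g: "G (e+b) \<le> 2" by (rule Gp[of 4 2]) (use o1 o2 o3 o4 o5 in \<open>auto simp: algebra_simps\<close>)
  show "f \<le> e + b \<Longrightarrow> e+b = f \<or> e+b = f+1 \<or> e+b = f+a" using L_top[of "e+b"] g o1 o2 o3 o4 o5 by linarith
qed

lemma BB: "d \<le> 2*b \<Longrightarrow> 2*b < e \<Longrightarrow> 2*b = d \<or> 2*b = d+1 \<or> 2*b = d+a"
proof -
  have g: "G (2*b) \<le> 2" by (rule Gp[of 2 2]) (use o1 o2 o3 o4 o5 in \<open>auto simp: algebra_simps\<close>)
  show "d \<le> 2*b \<Longrightarrow> 2*b < e \<Longrightarrow> 2*b = d \<or> 2*b = d+1 \<or> 2*b = d+a" using L_d[of "2*b"] g o1 o2 o3 o4 o5 by linarith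
qed

lemma DD: "f \<le> 2*d \<Longrightarrow> 2*d = f \<or> 2*d = f+1 \<or> 2*d = f+a \<or> 2*d = f+b"
proof -
  have g: "G (2*d) \<le> 2" by (rule Gp[of 3 3]) (use o1 o2 o3 o4 o5 in \<open>auto simp: algebra_simps\<close>)
  show "f \<le> 2*d \<Longrightarrow> 2*d = f \<or> 2*d = f+1 \<or> 2*d = f+a \<or> 2*d = f+b" using L_top[of "2*d"] g o1 o2 o3 o4 o5 by linarith
qed

lemma BD: "e \<le> b + d \<Longrightarrow> b + d < f \<Longrightarrow> b+d = e \<or> b+d = e+1 \<or> b+d = e+a"
proof -
  have g: "G (b+d) \<le> 2" by (rule Gp[of 2 3]) (use o1 o2 o3 o4 o5 in \<open>auto simp: algebra_simps\<close>)
  show "e \<le> b + d \<Longrightarrow> b + d < f \<Longrightarrow> b+d = e \<or> b+d = e+1 \<or> b+d = e+a" using L_e[of "b+d"] g o1 o2 o3 o4 o5 by linarith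
qed

end
end




context sys6 begin

abbreviation "g3 \<equiv> grd_desc [b,a,1]"

lemma g3_small: "t < a \<Longrightarrow> g3 t = t"
  using o2 by (simp add: grd_desc.simps)

lemma g3_a: "g3 a = 1"
  using o1 o2 by (simp add: grd_desc.simps)

lemma g3_2a: "2*a < b \<Longrightarrow> g3 (2*a) = 2"
  using o1 o2 by (simp add: grd_desc.simps)

lemma core:
  fixes w na nb nd :: nat
  assumes DE: "f < d + e \<Longrightarrow> d+e = f+1 \<or> d+e = f+a \<or> d+e = f+b"
    and EE: "f < d + e \<Longrightarrow> 2*e = f+a \<or> 2*e = f+b \<or> 2*e = f+d"
    and AE: "f \<le> e + a \<Longrightarrow> e+a = f \<or> e+a = f+1"
    and BE: "f \<le> e + b \<Longrightarrow> e+b = f \<or> e+b = f+1 \<or> e+b = f+a"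
    and BB: "d \<le> 2*b \<Longrightarrow> 2*b < e \<Longrightarrow> 2*b = d \<or> 2*b = d+1 \<or> 2*b = d+a"
    and w: "w = a*na + b*nb + d*nd" and fw: "f \<le> w"
    and ha: "0 < na \<Longrightarrow> w < e + a" and hb: "0 < nb \<Longrightarrow> w < e + b" and hd: "0 < nd \<Longrightarrow> w < e + d"
    and cnt: "na + nb + nd \<le> g3 (w - e)"
  shows "na = 0 \<and> nb = 0 \<and> nd = 2"
proof -
  note o = o1 o2 o3 o4 o5
  have m1: "a*na \<le> d*na" "b*nb \<le> d*nb" using o by (simp_all add: mult_le_mono1)
  have N2: "2 \<le> na + nb + nd"
  proof (rule ccontr)
    assume "\<not> 2 \<le> na + nb + nd"
    then have "na + nb + nd \<le> 1" by simp
    then have "d * (na + nb + nd) \<le> d * 1" by (rule mult_le_mono2)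
    then have "d*na + d*nb + d*nd \<le> d" by (simp add: distrib_left)
    then have "w \<le> d" using w m1 by linarith
    then show False using fw o by linarith
  qed
  have wlt: "w < d + e"
  proof -
    have "0 < na \<or> 0 < nb \<or> 0 < nd" using N2 by linarith
    then show ?thesis using ha hb hd o by auto
  qed
  have fde: "f < d + e" using wlt fw by linarith
  note DE' = DE[OF fde] and EE' = EE[OF fde]
  have e2d: "e < 2*d" using EE' fde o by linarith
  consider (A) "0 < na" | (B) "na = 0" "0 < nb" | (D) "na = 0" "nb = 0" by auto
  then show ?thesis
  proof cases
    case D
    then have wd: "w = d*nd" using w by simp
    have "nd \<noteq> 0"
    proof
      assume "nd = 0"
      then have "w = 0" using wd by simp
      then show False using fw o by linarith
    qed
    then have "w < e + d" using hd by simp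
    have "nd \<le> 2"
    proof (rule ccontr)
      assume "\<not> nd \<le> 2"
      then have "d*3 \<le> d*nd" by (intro mult_le_mono2) simp
      then show False using wd \<open>w < e + d\<close> e2d by linarith
    qed
    moreover have "nd \<ge> 2"
    proof (rule ccontr)
      assume "\<not> nd \<ge> 2"
      then have "d*nd \<le> d*1" by (intro mult_le_mono2) simp
      then show False using wd fw o by linarith
    qed
    ultimately show ?thesis using D by simp
  next
    case A
    have wa: "w < e + a" using ha A by simp
    have fa: "e + a = f + 1" using AE wa fw by linarith
    have wf: "w = f" using wa fa fw by linarith
    have bb: "b = 2*a - 1" and dd: "d = a + b - 1"
    proof -
      have "e + b = f \<or> e + b = f + 1 \<or> e + b = f + a" using BE fa o by linarith
      then have b2: "b + 1 = 2*a" using fa o by linarith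
      then show "b = 2*a - 1" by linarith
      show "d = a + b - 1" using DE' fa o b2 by linarith
    qed
    have ee: "e = a + d - 1" using EE' fa dd o by linarith
    have t: "w - e = a - 1" using wf fa o by linarith
    have g: "g3 (w - e) = a - 1" unfolding t by (rule g3_small) (use o in linarith)
    define N where "N = na + nb + nd"
    define Q where "Q = nb + 2*nd"
    have Nle: "N \<le> a - 1" using cnt g N_def by simp
    have N2': "2 \<le> N" using N2 N_def by simp
    have eq: "int a * int na + int b * int nb + int d * int nd = 5 * int a - 4"
    proof -
      have "int w = 5 * int a - 4" using wf fa ee dd bb o by linarith
      then show ?thesis using w by simp
    qed
    have eq2: "(int a - 1) * (int N + int Q - 5) = 1 - int N"
    proof -
      have ib: "int b = 2 * int a - 1" and id: "int d = 3 * int a - 2" using bb dd o by linarith+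
      have e2: "int a * int na + (2 * int a - 1) * int nb + (3 * int a - 2) * int nd = 5 * int a - 4"
        using eq unfolding ib id .
      have "(int a - 1) * (int N + int Q - 5) - (1 - int N) =
          (int a * int na + (2 * int a - 1) * int nb + (3 * int a - 2) * int nd) - (5 * int a - 4)"
        unfolding N_def Q_def by (simp add: algebra_simps)
      then show ?thesis using e2 by linarith
    qed
    show ?thesis
    proof (cases "int N + int Q - 5 \<ge> 0")
      case True
      then have "(int a - 1) * (int N + int Q - 5) \<ge> 0" using o by simp
      then show ?thesis using eq2 N2' by linarith
    next
      case False
      then have "(int a - 1) * (int N + int Q - 5) \<le> (int a - 1) * (-1)"
        by (intro mult_left_mono) (use o in auto)
      then have "(int a - 1) * (int N + int Q - 5) \<le> 1 - int a" by simp
      moreover have "N + 1 \<le> a" using Nle o by linarith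
      then have "int N + 1 \<le> int a" by linarith
      ultimately show ?thesis using eq2 by linarith
    qed
  next
    case B
    have wb: "w < e + b" using hb B by simp
    have fb: "e + b = f + 1 \<or> e + b = f + a" using BE wb fw by linarith
    have wnb: "w = b*nb + d*nd" using w B by simp
    have mb: "\<And>k. k \<le> nb \<Longrightarrow> b*k \<le> b*nb" "\<And>k. nb \<le> k \<Longrightarrow> b*nb \<le> b*k" by (simp_all add: mult_le_mono2)
    have md: "\<And>k. k \<le> nd \<Longrightarrow> d*k \<le> d*nd" "\<And>k. nd \<le> k \<Longrightarrow> d*nd \<le> d*k" by (simp_all add: mult_le_mono2)
    from fb show ?thesis
    proof
      assume f1: "e + b = f + 1"
      have wf: "w = f" using wb f1 fw by linarith
      have t: "w - e = b - 1" using wf f1 o by linarith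
      have dcase: "d = a + b - 1 \<or> d = 2*b - 1" using DE' f1 o by linarith
      from dcase show ?thesis
      proof
        assume d1: "d = a + b - 1"
        have ecase: "e = 2*b - 1 \<or> e = a + 2*b - 2" using EE' f1 d1 o by linarith
        from ecase show ?thesis
        proof
          assume e1: "e = 2*b - 1"
          have W: "b*nb + d*nd = 3*b - 2" using wnb wf f1 e1 o by linarith
          have "nd = 0 \<or> nd = 1 \<or> nd \<ge> 2" by linarith
          then show ?thesis
          proof (elim disjE)
            assume "nd = 0"
            then have W0: "b*nb = 3*b - 2" using W by simp
            have "nb \<le> 2 \<or> nb \<ge> 3" by linarith
            then show ?thesis using mb[of 2] mb[of 3] W0 o by (auto simp: algebra_simps)
          next
            assume n1: "nd = 1"
            then have W1: "b*nb = 2*b - a - 1" using W d1 o by simp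
            have "nb = 1 \<or> nb \<ge> 2" using B by linarith
            then show ?thesis
            proof
              assume "nb = 1"
              then have "b = a + 1" using W1 o by simp
              then have "g3 (w - e) = 1" using t g3_a by simp
              then show ?thesis using cnt n1 \<open>nb = 1\<close> by simp
            next
              assume "nb \<ge> 2"
              then show ?thesis using mb[of 2] W1 o by linarith
            qed
          next
            assume "nd \<ge> 2"
            then show ?thesis using md(1)[of 2] mb(1)[of 1] B W d1 o by linarith
          qed
        next
          assume e2: "e = a + 2*b - 2"
          have W: "b*nb + d*nd = a + 3*b - 3" using wnb wf f1 e2 o by linarith
          have "nd = 0 \<or> nd = 1 \<or> nd = 2 \<or> nd \<ge> 3" by linarith
          then show ?thesis
          proof (elim disjE)
            assume n0: "nd = 0"
            then have W0: "b*nb = a + 3*b - 3" using W by simp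
            have nb3: "nb = 3"
            proof -
              have "nb \<le> 2 \<or> nb = 3 \<or> nb \<ge> 4" by linarith
              then show ?thesis using mb(2)[of 2] mb(1)[of 4] W0 o by auto
            qed
            then have a3: "a = 3" using W0 o by simp
            have "d \<le> 2*b" "2*b < e" using d1 e2 a3 o by linarith+
            then have "2*b = d \<or> 2*b = d+1 \<or> 2*b = d+a" by (rule BB)
            then have b5: "b = 5" using d1 a3 o by linarith
            have "w - e = 4" using t b5 by simp
            then have "g3 (w - e) = 2" using a3 b5 by (simp add: grd_desc.simps)
            then show ?thesis using cnt n0 nb3 by simp
          next
            assume "nd = 1"
            then have W1: "b*nb = 2*b - 2" using W d1 o by simp
            have "nb = 1 \<or> nb \<ge> 2" using B by linarith
          then show ?thesis
          proof
            assume "nb = 1"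
            then have "b = 2*b - 2" using W1 by simp
            then show ?thesis using o by linarith
          next
            assume "nb \<ge> 2"
            then show ?thesis using mb(1)[of 2] W1 o by linarith
          qed
          next
            assume "nd = 2"
            then have W2: "b*nb + 2*d = a + 3*b - 3" using W by simp
            then show ?thesis using mb(1)[of 1] B d1 o by linarith
          next
            assume "nd \<ge> 3"
            then show ?thesis using md(1)[of 3] W d1 o by linarith
          qed
        qed
      next
        assume d2: "d = 2*b - 1"
        have e3: "e = 3*b - 2" using EE' f1 d2 o by linarith
        have W: "b*nb + d*nd = 4*b - 3" using wnb wf f1 e3 o by linarith
        have "nd = 0 \<or> nd = 1 \<or> nd \<ge> 2" by linarith
        then show ?thesis
        proof (elim disjE)
          assume n0: "nd = 0"
          then have W0: "b*nb = 4*b - 3" using W by simp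
          have nb3: "nb = 3" and b3: "b = 3"
          proof -
            have "nb \<le> 3 \<or> nb \<ge> 4" by linarith
            then have "b \<le> 3" using mb(2)[of 3] mb(1)[of 4] W0 o by auto
            then show b3: "b = 3" using o by linarith
            show "nb = 3" using W0 b3 by simp
          qed
          then have a2: "a = 2" using o by linarith
          have "w - e = a" using t b3 a2 by simp
          then have "g3 (w - e) = 1" using g3_a by simp
          then show ?thesis using cnt nb3 by simp
        next
          assume "nd = 1"
          then have W1: "b*nb = 2*b - 2" using W d2 o by simp
          have "nb = 1 \<or> nb \<ge> 2" using B by linarith
          then show ?thesis
          proof
            assume "nb = 1"
            then have "b = 2*b - 2" using W1 by simp
            then show ?thesis using o by linarith
          next
            assume "nb \<ge> 2"
            then show ?thesis using mb(1)[of 2] W1 o by linarith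
          qed
        next
          assume "nd \<ge> 2"
          then show ?thesis using md(1)[of 2] mb(1)[of 1] B W d2 o by linarith
        qed
      qed
    next
      assume f2: "e + b = f + a"
      have d3: "d = 2*b - a" using DE' f2 o by linarith
      have e3: "e = 3*b - 2*a" using EE' f2 d3 o by linarith
      have W: "b*nb + d*nd = w" using wnb by simp
      have wr: "4*b \<le> w + 3*a" "w + 2*a < 4*b" using wb fw f2 e3 o by linarith+
      have "nd = 0 \<or> nd = 1 \<or> nd \<ge> 2" by linarith
      then show ?thesis
      proof (elim disjE)
        assume n0: "nd = 0"
        then have W0: "b*nb = w" using W by simp
        have "nb = 2 \<or> nb = 3"
        proof -
          have "nb \<le> 1 \<or> nb = 2 \<or> nb = 3 \<or> nb \<ge> 4" by linarith
          then show ?thesis using mb(2)[of 1] mb(1)[of 4] W0 wr fw e3 o by auto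
        qed
        then show ?thesis
        proof
          assume nb2: "nb = 2"
          then have "w = 2*b" using W0 by simp
          then have "f \<le> e + a" using wr f2 e3 o by linarith
          then have "e + a = f \<or> e + a = f + 1" by (rule AE)
          then have "w - e \<le> 1" "w - e < a" using \<open>w = 2*b\<close> f2 e3 o by linarith+
          then have "g3 (w - e) \<le> 1" using g3_small by simp
          then show ?thesis using cnt nb2 by simp
        next
          assume nb3: "nb = 3"
          then have "w = 3*b" using W0 by simp
          then have "w - e = 2*a" "2*a < b" using e3 wr o by linarith+
          then have "g3 (w - e) = 2" using g3_2a by simp
          then show ?thesis using cnt nb3 by simp
        qed
      next
        assume n1: "nd = 1"
        then have W1: "b*nb + d = w" using W by simp
        have nb1: "nb = 1"
        proof -
          have "nb = 1 \<or> nb \<ge> 2" using B by linarith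
          then show ?thesis
          proof
            assume "nb \<ge> 2"
            then have "b*2 \<le> b*nb" by (rule mb(1))
            then show ?thesis using W1 wr d3 o by linarith
          qed
        qed
        then have "w - e = a" using W1 d3 e3 o by simp
        then have "g3 (w - e) = 1" using g3_a by simp
        then show ?thesis using cnt nb1 n1 by simp
      next
        assume "nd \<ge> 2"
        then show ?thesis using md(1)[of 2] mb(1)[of 1] B W wr d3 o by linarith
      qed
    qed
  qed
qed

end



context sys6 begin

lemma final:
  assumes DE: "f < d + e \<Longrightarrow> d+e = f+1 \<or> d+e = f+a \<or> d+e = f+b"
    and EE: "f < d + e \<Longrightarrow> 2*e = f+a \<or> 2*e = f+b \<or> 2*e = f+d"
    and BE: "f \<le> e + b \<Longrightarrow> e+b = f \<or> e+b = f+1 \<or> e+b = f+a"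
    and DD: "f \<le> 2*d \<Longrightarrow> 2*d = f \<or> 2*d = f+1 \<or> 2*d = f+a \<or> 2*d = f+b"
    and BD: "e \<le> b + d \<Longrightarrow> b + d < f \<Longrightarrow> b+d = e \<or> b+d = e+1 \<or> b+d = e+a"
    and f2d: "f \<le> 2*d" and e2d: "e < 2*d"
    and u1: "2*d \<noteq> e + 1" and ua: "2*d \<noteq> e + a" and ub: "2*d \<noteq> e + b"
  shows "(a = 2 \<and> b = 3 \<and> e = d + 1 \<and> f = 2*d \<and> d > 4)
    \<or> (b = 2*a - 1 \<and> e = a + d - 1 \<and> f = 2*d - 1 \<and> d \<ge> 3*a - 1)
    \<or> (b = 2*a \<and> e = a + d \<and> f = 2*d \<and> d \<ge> 3*a - 1 \<and> d \<noteq> 3*a)"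
proof -
  note o = o1 o2 o3 o4 o5
  have fde: "f < d + e" using f2d o by linarith
  note DE' = DE[OF fde] and EE' = EE[OF fde] and DD' = DD[OF f2d]
  from DE' consider (r1) "d+e = f+1" | (ra) "d+e = f+a" | (rb) "d+e = f+b" by blast
  then show ?thesis
  proof cases
    case r1
    have e1: "e = d + 1" and ff: "f = 2*d" using r1 f2d o by linarith+
    have a2: "a = 2" using EE' e1 ff o by linarith
    have "e \<le> b + d" "b + d < f" using e1 ff o by linarith+
    then have "b+d = e \<or> b+d = e+1 \<or> b+d = e+a" by (rule BD)
    then have b3: "b = 3" using e1 a2 o by linarith
    have "d > 4" using ub e1 b3 o by linarith
    then show ?thesis using a2 b3 e1 ff by simp
  next
    case ra
    have "e = d + a \<and> f = 2*d \<or> e = d + a - 1 \<and> f = 2*d - 1" using DD' ra o by linarith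
    then show ?thesis
    proof
      assume h: "e = d + a \<and> f = 2*d"
      have b2: "b = 2*a" using EE' h ua o by linarith
      have nd: "d \<noteq> 3*a" using ub h b2 by linarith
      have "d \<ge> 3*a - 1"
      proof (rule ccontr)
        assume "\<not> d \<ge> 3*a - 1"
        then have "f \<le> e + b" using h b2 o by linarith
        then have "e+b = f \<or> e+b = f+1 \<or> e+b = f+a" by (rule BE)
        then show False using h b2 o \<open>\<not> d \<ge> 3*a - 1\<close> by linarith
      qed
      then show ?thesis using h b2 nd by simp
    next
      assume h: "e = d + a - 1 \<and> f = 2*d - 1"
      have b2: "b = 2*a - 1" using EE' h ua o by linarith
      have nd: "d \<noteq> 3*a - 2" using ub h b2 o by linarith
      have "d \<ge> 3*a - 1"
      proof (rule ccontr)
        assume "\<not> d \<ge> 3*a - 1"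
        then have "f \<le> e + b" using h b2 o by linarith
        then have "e+b = f \<or> e+b = f+1 \<or> e+b = f+a" by (rule BE)
        then show False using h b2 nd o \<open>\<not> d \<ge> 3*a - 1\<close> by linarith
      qed
      then show ?thesis using h b2 o by (simp add: add.commute)
    qed
  next
    case rb
    have "2*e = f + d" using EE' rb o DD' by linarith
    then have False using rb ub by linarith
    then show ?thesis ..
  qed
qed

end



context sys6 begin

abbreviation "S \<equiv> [1,a,b,d,e]"

lemma grdC: "grd [1,a,b,d,e,f] v = G v"
  by (simp add: grd_def del: grd_desc.simps)

lemma grdS: "grd S v = grd_desc [e,d,b,a,1] v"
  by (simp add: grd_def del: grd_desc.simps)

lemma grdS_ge: "e \<le> v \<Longrightarrow> grd S v = Suc (grd S (v - e))"
  unfolding grdS by (rule gd_ge) (use o1 o2 o3 o4 in auto)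

lemma optS_grd: "opt S v \<le> grd S v"
  by (rule opt_le_grd5) (use o1 o2 o3 o4 in auto)

lemma optS_add: "i < 5 \<Longrightarrow> opt S (v + S ! i) \<le> Suc (opt S v)"
  by (rule opt_add) auto

context
  assumes can: "canonical [1,a,b,d,e,f]"
begin

lemma witness:
  assumes noncan: "\<not> canonical S"
  shows "\<exists>w na nb nd. w = a*na + b*nb + d*nd \<and> f \<le> w \<and> (0 < na \<longrightarrow> w < e + a)
     \<and> (0 < nb \<longrightarrow> w < e + b) \<and> (0 < nd \<longrightarrow> w < e + d) \<and> na + nb + nd \<le> g3 (w - e)"
proof -
  note o = o1 o2 o3 o4 o5
  define P where "P v \<longleftrightarrow> 0 < v \<and> opt S v < grd S v" for v
  have ex: "\<exists>v. P v" using noncan unfolding canonical_def P_def by auto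
  define w where "w = (LEAST v. P v)"
  have Pw: "P w" unfolding w_def using ex by (metis LeastI)
  have minw: "\<And>v. 0 < v \<Longrightarrow> v < w \<Longrightarrow> grd S v \<le> opt S v"
  proof -
    fix v assume "0 < v" "v < w"
    have "\<not> P v" using \<open>v < w\<close> unfolding w_def by (rule not_less_Least)
    then show "grd S v \<le> opt S v" using \<open>0 < v\<close> unfolding P_def by simp
  qed
  have minw': "\<And>v. v < w \<Longrightarrow> grd S v \<le> opt S v"
  proof -
    fix v assume "v < w"
    show "grd S v \<le> opt S v"
    proof (cases "v = 0")
      case True then show ?thesis unfolding grdS by simp
    next
      case False then show ?thesis using minw \<open>v < w\<close> by simp
    qed
  qed
  have w0: "0 < w" and ce: "opt S w < grd S w" using Pw unfolding P_def by auto
  obtain x where xs: "(\<Sum>i<length S. S ! i * x i) = w" and xc: "(\<Sum>i<length S. x i) = opt S w"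
    using opt_ex[of S w] by auto
  have xs5: "x 0 + a * x 1 + b * x 2 + d * x 3 + e * x 4 = w" using xs by (simp only: sum5)
  have xc5: "x 0 + x 1 + x 2 + x 3 + x 4 = opt S w" using xc by (simp only: cnt5)
  have cross: "w < e + S ! i" if i: "i < 5" "0 < x i" for i
  proof (rule ccontr)
    assume "\<not> w < e + S ! i"
    then have ge: "e + S ! i \<le> w" by simp
    define c where "c = S ! i"
    have cpos: "0 < c" unfolding c_def using i o by (auto simp: nth_Cons')
    have r: "opt S (w - c) \<le> opt S w - 1" "c \<le> w"
      using opt_rem[of i S x w] i xs xc unfolding c_def by auto
    have opos: "1 \<le> opt S w" using xc5 i by (auto simp: less_Suc_eq numeral_eq_Suc)
    have A: "grd S (w - c) \<le> opt S (w - c)"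
      by (rule minw) (use ge cpos o in \<open>simp_all add: c_def\<close>)
    have B: "grd S (w - c) = Suc (grd S (w - c - e))" using ge c_def by (intro grdS_ge) simp
    have C: "grd S w = Suc (grd S (w - e))" using ge by (intro grdS_ge) simp
    have D: "grd S (w - e) \<le> opt S (w - e)" using minw' ge o by simp
    have "opt S ((w - e - c) + S ! i) \<le> Suc (opt S (w - e - c))" using optS_add i by blast
    moreover have "(w - e - c) + S ! i = w - e" using ge c_def by simp
    ultimately have E: "opt S (w - e) \<le> Suc (opt S (w - e - c))" by simp
    have F: "opt S (w - e - c) \<le> grd S (w - e - c)" by (rule optS_grd)
    have "w - c - e = w - e - c" by simp
    then have B': "grd S (w - c) = Suc (grd S (w - e - c))" using B by simp
    show False using A B' C D E F r(1) opos ce by linarith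
  qed
  have x4: "x 4 = 0"
  proof (rule ccontr)
    assume "x 4 \<noteq> 0"
    then have p: "0 < x 4" by simp
    have r: "opt S (w - e) \<le> opt S w - 1" "e \<le> w"
      using opt_rem[of 4 S x w] p xs xc by auto
    have opos: "1 \<le> opt S w" using xc5 p by linarith
    have C: "grd S w = Suc (grd S (w - e))" using r(2) by (rule grdS_ge)
    have D: "grd S (w - e) \<le> opt S (w - e)" using minw' r(2) o by simp
    show False using C D r(1) opos ce by linarith
  qed
  have fw: "f \<le> w"
  proof (rule ccontr)
    assume "\<not> f \<le> w"
    then have wf: "w < f" by simp
    let ?y = "x(5 := 0)"
    have "(\<Sum>i<length [1,a,b,d,e,f]. [1,a,b,d,e,f] ! i * ?y i) = w"
      using xs5 by (simp only: sum6) simp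
    then have "grd [1,a,b,d,e,f] w \<le> (\<Sum>i<length [1,a,b,d,e,f]. ?y i)"
      by (rule can_le[OF can w0])
    also have "(\<Sum>i<length [1,a,b,d,e,f]. ?y i) = opt S w"
      using xc5 by (simp only: cnt6) simp
    finally have "grd [1,a,b,d,e,f] w \<le> opt S w" .
    moreover have "grd [1,a,b,d,e,f] w = grd S w"
      unfolding grdC grdS using wf by (simp add: gd_lt del: grd_desc.simps)
    ultimately show False using ce by simp
  qed
  have x0: "x 0 = 0"
  proof (rule ccontr)
    assume "x 0 \<noteq> 0"
    then have "w < e + S ! 0" using cross[of 0] by simp
    then show False using fw o by simp
  qed
  define na where "na = x 1"
  define nb where "nb = x 2"
  define nd where "nd = x 3"
  have W: "w = a*na + b*nb + d*nd" using xs5 x0 x4 unfolding na_def nb_def nd_def by simp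
  have ha: "0 < na \<longrightarrow> w < e + a" using cross[of 1] unfolding na_def by simp
  have hb: "0 < nb \<longrightarrow> w < e + b" using cross[of 2] unfolding nb_def by simp
  have hd: "0 < nd \<longrightarrow> w < e + d" using cross[of 3] unfolding nd_def by simp
  have pos: "0 < na \<or> 0 < nb \<or> 0 < nd" using W w0 by (cases "na = 0"; cases "nb = 0"; cases "nd = 0") auto
  have wde: "w < d + e" using pos ha hb hd o by auto
  have "grd S w = Suc (grd S (w - e))" using fw o by (intro grdS_ge) simp
  also have "grd S (w - e) = g3 (w - e)"
    unfolding grdS using wde o by (simp add: gd_lt del: grd_desc.simps)
  finally have gw: "grd S w = Suc (g3 (w - e))" .
  have "na + nb + nd = opt S w" using xc5 x0 x4 unfolding na_def nb_def nd_def by simp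
  then have cnt: "na + nb + nd \<le> g3 (w - e)" using ce gw by simp
  show ?thesis using W fw ha hb hd cnt by blast
qed

lemma grd_part:
  assumes sh: "(b = 2*a - 1 \<and> e = a + d - 1 \<and> f = 2*d - 1 \<and> d \<ge> 3*a - 1)
    \<or> (b = 2*a \<and> e = a + d \<and> f = 2*d \<and> d \<ge> 3*a - 1)"
    and l: "l = (e + b - 1) div b"
  shows "int (grd [1,a,b,d,e,f] (l * b)) = int (l * b) - int e + 1 - int ((l * b - e) div a) * (int a - 1)"
    and "grd [1,a,b,d,e,f] (l * b) \<le> l"
proof -
  note o = o1 o2 o3 o4 o5
  have lb1: "l * b \<le> e + b - 1" unfolding l by (rule div_times_less_eq_dividend)
  have "e + b - 1 = l * b + (e + b - 1) mod b" unfolding l by simp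
  moreover have "(e + b - 1) mod b < b" using o by simp
  ultimately have lb2: "e \<le> l * b" using o by linarith
  have lb3: "l * b < f"
  proof (cases "b = 2*a - 1")
    case True
    then show ?thesis using sh lb1 o by linarith
  next
    case False
    then have h: "b = 2*a \<and> e = a + d \<and> f = 2*d \<and> d \<ge> 3*a - 1" using sh by simp
    show ?thesis
    proof (cases "d = 3*a - 1")
      case False
      then show ?thesis using h lb1 o by linarith
    next
      case True
      have "l \<le> 2 \<or> l \<ge> 3" by linarith
      then show ?thesis
      proof
        assume "l \<le> 2"
        then have "l * b \<le> 2 * b" by (rule mult_le_mono1)
        then show ?thesis using h True o by linarith
      next
        assume "l \<ge> 3"
        then have "3 * b \<le> l * b" by (rule mult_le_mono1)
        then show ?thesis using h True lb1 o by linarith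
      qed
    qed
  qed
  have lbpos: "0 < l * b" using lb2 o by linarith
  define u where "u = l * b - e"
  have ub: "u < b" using lb1 lb2 o unfolding u_def by linarith
  have "grd [1,a,b,d,e,f] (l * b) = grd_desc [e,d,b,a,1] (l * b)"
    unfolding grdC using lb3 by (simp add: gd_lt del: grd_desc.simps)
  also have "\<dots> = Suc (grd_desc [e,d,b,a,1] u)" unfolding u_def
    using lb2 o by (intro gd_ge) auto
  also have "grd_desc [e,d,b,a,1] u = g3 u" using ub o by (simp add: gd_lt del: grd_desc.simps)
  also have "g3 u = u div a + u mod a" using ub by (simp add: grd_desc.simps)
  finally have g: "grd [1,a,b,d,e,f] (l * b) = Suc (u div a + u mod a)" .
  have dm: "int u = int (u div a) * int a + int (u mod a)"
    by (metis div_mult_mod_eq of_nat_add of_nat_mult)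
  have iu: "int (l * b) - int e = int u" unfolding u_def using lb2 by simp
  show "int (grd [1,a,b,d,e,f] (l * b)) = int (l * b) - int e + 1 - int ((l * b - e) div a) * (int a - 1)"
    unfolding g iu u_def[symmetric] using dm by (simp add: algebra_simps)
  have "grd [1,a,b,d,e,f] (l * b) \<le> (\<Sum>i<length [1,a,b,d,e,f]. (\<lambda>i. if i = 2 then l else 0) i)"
    by (rule can_le[OF can]) (use lbpos in \<open>simp_all add: sum6\<close>)
  then show "grd [1,a,b,d,e,f] (l * b) \<le> l" by (simp add: cnt6)
qed

end
end


theorem theorem9:
  fixes c2 c3 c4 c5 c6 :: nat
  assumes sys: "is_system [1, c2, c3, c4, c5, c6]"
    and can: "canonical [1, c2, c3, c4, c5, c6]"
    and noncan: "\<not> canonical [1, c2, c3, c4, c5]"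
  defines "l \<equiv> (c5 + c3 - 1) div c3"
  shows "(c2 = 2 \<and> c3 = 3 \<and> c5 = c4 + 1 \<and> c6 = 2 * c4 \<and> c4 > 4)
    \<or> (c3 = 2 * c2 - 1 \<and> c5 = c2 + c4 - 1 \<and> c6 = 2 * c4 - 1 \<and> c4 \<ge> 3 * c2 - 1
        \<and> int (grd [1, c2, c3, c4, c5, c6] (l * c3))
            = int (l * c3) - int c5 + 1 - int ((l * c3 - c5) div c2) * (int c2 - 1)
        \<and> grd [1, c2, c3, c4, c5, c6] (l * c3) \<le> l)
    \<or> (c3 = 2 * c2 \<and> c5 = c2 + c4 \<and> c6 = 2 * c4 \<and> c4 \<ge> 3 * c2 - 1 \<and> c4 \<noteq> 3 * c2
        \<and> int (grd [1, c2, c3, c4, c5, c6] (l * c3))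
            = int (l * c3) - int c5 + 1 - int ((l * c3 - c5) div c2) * (int c2 - 1)
        \<and> grd [1, c2, c3, c4, c5, c6] (l * c3) \<le> l)"
proof -
  have ord: "1 < c2" "c2 < c3" "c3 < c4" "c4 < c5" "c5 < c6"
    using sys by (auto simp: is_system_def)
  interpret sys6 c2 c3 c4 c5 c6 by unfold_locales (rule ord)+
  obtain w na nb nd where W: "w = c2*na + c3*nb + c4*nd" "c6 \<le> w"
    "0 < na \<longrightarrow> w < c5 + c2" "0 < nb \<longrightarrow> w < c5 + c3" "0 < nd \<longrightarrow> w < c5 + c4"
    "na + nb + nd \<le> grd_desc [c3,c2,1] (w - c5)"
    using witness[OF can noncan] by blast
  have C: "na = 0 \<and> nb = 0 \<and> nd = 2"
    by (rule core[OF DE[OF can] EE[OF can] AE[OF can] BE[OF can] BB[OF can] W(1,2)])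
      (use W in auto)
  then have w2: "w = 2 * c4" using W(1) by simp
  have f2d: "c6 \<le> 2 * c4" using W(2) w2 by simp
  have e2d: "c5 < 2 * c4" using f2d ord by linarith
  have "na + nb + nd = 2" using C by simp
  then have "2 \<le> grd_desc [c3,c2,1] (w - c5)" using W(6) by linarith
  then have g: "2 \<le> grd_desc [c3,c2,1] (2 * c4 - c5)" unfolding w2 .
  have u: "\<not> (2 * c4 - c5 = 0 \<or> 2 * c4 - c5 = c3 \<or> 2 * c4 - c5 = c2 \<or> 2 * c4 - c5 = 1)"
    unfolding G3_le1[symmetric] using g by linarith
  have u1: "2 * c4 \<noteq> c5 + 1" and ua: "2 * c4 \<noteq> c5 + c2" and ub: "2 * c4 \<noteq> c5 + c3"
    using u e2d by auto
  have sh: "(c2 = 2 \<and> c3 = 3 \<and> c5 = c4 + 1 \<and> c6 = 2*c4 \<and> c4 > 4)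
    \<or> (c3 = 2*c2 - 1 \<and> c5 = c2 + c4 - 1 \<and> c6 = 2*c4 - 1 \<and> c4 \<ge> 3*c2 - 1)
    \<or> (c3 = 2*c2 \<and> c5 = c2 + c4 \<and> c6 = 2*c4 \<and> c4 \<ge> 3*c2 - 1 \<and> c4 \<noteq> 3*c2)"
    by (rule final[OF DE[OF can] EE[OF can] BE[OF can] DD[OF can] BD[OF can] f2d e2d])
      (assumption | rule u1 ua ub)+
  then show ?thesis
  proof (elim disjE)
    assume h: "c2 = 2 \<and> c3 = 3 \<and> c5 = c4 + 1 \<and> c6 = 2*c4 \<and> c4 > 4"
    then show ?thesis by blast
  next
    assume h: "c3 = 2*c2 - 1 \<and> c5 = c2 + c4 - 1 \<and> c6 = 2*c4 - 1 \<and> c4 \<ge> 3*c2 - 1"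
    have "int (grd [1, c2, c3, c4, c5, c6] (l * c3))
            = int (l * c3) - int c5 + 1 - int ((l * c3 - c5) div c2) * (int c2 - 1)"
      "grd [1, c2, c3, c4, c5, c6] (l * c3) \<le> l"
      using grd_part[OF can _ l_def[THEN meta_eq_to_obj_eq]] h by auto
    then show ?thesis using h by blast
  next
    assume h: "c3 = 2*c2 \<and> c5 = c2 + c4 \<and> c6 = 2*c4 \<and> c4 \<ge> 3*c2 - 1 \<and> c4 \<noteq> 3*c2"
    have "int (grd [1, c2, c3, c4, c5, c6] (l * c3))
            = int (l * c3) - int c5 + 1 - int ((l * c3 - c5) div c2) * (int c2 - 1)"
      "grd [1, c2, c3, c4, c5, c6] (l * c3) \<le> l"
      using grd_part[OF can _ l_def[THEN meta_eq_to_obj_eq]] h by auto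
    then show ?thesis using h by blast
  qed
qed

end
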